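(* Let $(X,d)$ be a compact metric space and $f_{0,\infty}=\{f_n\}_{n=0}^\infty$ a sequence of continuous self-maps of $X$. For $i\ge0$ let $f_{i,\infty}=\{f_n\}_{n=i}^\infty$. Then \[h^{*}(f_{i,\infty})\leq h^{*}(f_{j,\infty}),\quad 0\leq i\leq j<\infty.\]
   Context: $f_i^n=f_{i+n-1}\circ\cdots\circ f_i$ ($n\ge1$), $f_i^0=\mathrm{id}$, $f_i^{-n}(B)=(f_i^n)^{-1}(B)$. $\mathcal S$ is the set of strictly increasing sequences $A=\{a_k\}_{k\ge1}$ of nonnegative integers. The topological sequence entropy of $f_{i,\infty}$ along $A$ is $h_A(f_{i,\infty})=\sup_{\mathscr A}\limsup_{n\to\infty}\frac1n\log\mathcal N(\bigvee_{k=1}^n f_i^{-a_k}\mathscr A)$ over finite open covers $\mathscr A$ ($\bigvee$ = common refinement, $\mathcal N$ = minimal cardinality of a subcover), and $h^*(f_{i,\infty})=\sup_{A\in\mathcal S}h_A(f_{i,\infty})$. *)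

theory Defs
  imports "HOL-Analysis.Analysis" "HOL-Library.Liminf_Limsup"
begin

text \<open>Nonautonomous iterates of a sequence g = (g 0, g 1, ...):
  fiter g 0 = id, fiter g (Suc n) = g n o fiter g n, i.e. fiter g n = g (n-1) o ... o g 0.
  For f_{i,infinity} we use g = (\<lambda>n. f (i+n)), so fiter g n = f_i^n.\<close>
primrec fiter :: "(nat \<Rightarrow> 'a \<Rightarrow> 'a) \<Rightarrow> nat \<Rightarrow> 'a \<Rightarrow> 'a" where
  "fiter g 0 = id"
| "fiter g (Suc n) = g n \<circ> fiter g n"

definition fpre :: "'a set \<Rightarrow> (nat \<Rightarrow> 'a \<Rightarrow> 'a) \<Rightarrow> nat \<Rightarrow> 'a set \<Rightarrow> 'a set" where
  "fpre X g n B = {x \<in> X. fiter g n x \<in> B}"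

definition open_covers :: "'a::topological_space set \<Rightarrow> 'a set set set" where
  "open_covers X = {\<A>. finite \<A> \<and> (\<forall>U\<in>\<A>. openin (top_of_set X) U) \<and> \<Union>\<A> = X}"

text \<open>Common refinement of f^{-a_k} A for k = 1..n (indices shifted to 0..<n).\<close>
definition join_pre :: "'a set \<Rightarrow> (nat \<Rightarrow> 'a \<Rightarrow> 'a) \<Rightarrow> (nat \<Rightarrow> nat) \<Rightarrow> nat \<Rightarrow> 'a set set \<Rightarrow> 'a set set" where
  "join_pre X g a n \<A> =
     {X \<inter> (\<Inter>k\<in>{..<n}. fpre X g (a k) (U k)) | U. \<forall>k<n. U k \<in> \<A>}"

definition Ncov :: "'a set \<Rightarrow> 'a set set \<Rightarrow> nat" where
  "Ncov X \<U> = Inf {card \<V> | \<V>. \<V> \<subseteq> \<U> \<and> finite \<V> \<and> X \<subseteq> \<Union>\<V>}"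

definition seq_entropy :: "'a::topological_space set \<Rightarrow> (nat \<Rightarrow> 'a \<Rightarrow> 'a) \<Rightarrow> (nat \<Rightarrow> nat) \<Rightarrow> ereal" where
  "seq_entropy X g a =
     (SUP \<A>\<in>open_covers X.
        limsup (\<lambda>n. ereal (ln (real (Ncov X (join_pre X g a n \<A>))) / real n)))"

definition seq_entropy_star :: "'a::topological_space set \<Rightarrow> (nat \<Rightarrow> 'a \<Rightarrow> 'a) \<Rightarrow> ereal" where
  "seq_entropy_star X g = (SUP a\<in>{a :: nat \<Rightarrow> nat. strict_mono a}. seq_entropy X g a)"

end

theory Submission
  imports Defs
begin

lemma Ncov_le:
  assumes "V \<subseteq> U" "finite V" "X \<subseteq> \<Union>V"
  shows "Ncov X U \<le> card V"
  unfolding Ncov_def by (rule cInf_lower) (use assms in auto)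

lemma Ncov_attained:
  assumes "finite U" "X \<subseteq> \<Union>U"
  shows "\<exists>V. V \<subseteq> U \<and> finite V \<and> X \<subseteq> \<Union>V \<and> card V = Ncov X U"
proof -
  let ?S = "{card \<V> | \<V>. \<V> \<subseteq> U \<and> finite \<V> \<and> X \<subseteq> \<Union>\<V>}"
  have "card U \<in> ?S" using assms by auto
  then have "Inf ?S \<in> ?S" by (intro Inf_nat_def1) auto
  then have "\<exists>V. Inf ?S = card V \<and> (V \<subseteq> U \<and> finite V \<and> X \<subseteq> \<Union>V)"
    by (simp only: mem_Collect_eq)
  then obtain V where V: "Inf ?S = card V \<and> (V \<subseteq> U \<and> finite V \<and> X \<subseteq> \<Union>V)"
    by (rule exE)
  show ?thesis unfolding Ncov_def using V by (intro exI[of _ V]) simp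
qed

lemma join_cover:
  assumes A: "finite A" "\<Union>A = X" and maps: "\<And>n x. x \<in> X \<Longrightarrow> fiter g n x \<in> X"
  shows "finite (join_pre X g a n A) \<and> X \<subseteq> \<Union>(join_pre X g a n A)"
proof
  have "join_pre X g a n A \<subseteq> (\<lambda>U. X \<inter> (\<Inter>k\<in>{..<n}. fpre X g (a k) (U k))) ` (PiE {..<n} (\<lambda>_. A))"
  proof
    fix W assume "W \<in> join_pre X g a n A"
    then obtain U where W: "W = X \<inter> (\<Inter>k\<in>{..<n}. fpre X g (a k) (U k))" and U: "\<forall>k<n. U k \<in> A"
      unfolding join_pre_def by auto
    have "W = X \<inter> (\<Inter>k\<in>{..<n}. fpre X g (a k) (restrict U {..<n} k))" using W by auto
    moreover have "restrict U {..<n} \<in> PiE {..<n} (\<lambda>_. A)" using U by auto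
    ultimately show "W \<in> (\<lambda>U. X \<inter> (\<Inter>k\<in>{..<n}. fpre X g (a k) (U k))) ` (PiE {..<n} (\<lambda>_. A))"
      by blast
  qed
  moreover have "finite (PiE {..<n} (\<lambda>_. A))" using A by (intro finite_PiE) auto
  ultimately show "finite (join_pre X g a n A)" by (meson finite_surj)
  show "X \<subseteq> \<Union>(join_pre X g a n A)"
  proof
    fix x assume x: "x \<in> X"
    define U where "U = (\<lambda>k. SOME B. B \<in> A \<and> fiter g (a k) x \<in> B)"
    have U: "U k \<in> A \<and> fiter g (a k) x \<in> U k" for k
    proof -
      have "fiter g (a k) x \<in> \<Union>A" using maps[OF x] A by auto
      then show ?thesis unfolding U_def by (rule UnionE) (rule someI2, auto)
    qed
    have "x \<in> X \<inter> (\<Inter>k\<in>{..<n}. fpre X g (a k) (U k))" using U x by (auto simp: fpre_def)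
    moreover have "X \<inter> (\<Inter>k\<in>{..<n}. fpre X g (a k) (U k)) \<in> join_pre X g a n A"
      unfolding join_pre_def using U by auto
    ultimately show "x \<in> \<Union>(join_pre X g a n A)" by blast
  qed
qed

lemma Ncov_bound:
  assumes A: "finite A" "\<Union>A = X"
    and mapsg: "\<And>n x. x \<in> X \<Longrightarrow> fiter g n x \<in> X"
    and mapsh: "\<And>n x. x \<in> X \<Longrightarrow> fiter h n x \<in> X"
    and comp: "\<And>t x. fiter g (m + t) x = fiter h t (fiter g m x)"
    and a: "strict_mono a" and mn: "m \<le> n"
  shows "Ncov X (join_pre X g a n A) \<le> Ncov X (join_pre X h (\<lambda>k. a (k + m) - m) (n - m) A) * card A ^ m"
proof -
  define b where "b = (\<lambda>k. a (k + m) - m)"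
  let ?J = "join_pre X h b (n - m) A"
  have jc: "finite ?J \<and> X \<subseteq> \<Union>?J" by (rule join_cover[OF A mapsh])
  from Ncov_attained[OF conjunct1[OF jc] conjunct2[OF jc]]
  obtain V where V0: "V \<subseteq> ?J \<and> finite V \<and> X \<subseteq> \<Union>V \<and> card V = Ncov X ?J"
    by (rule exE)
  note V = conjunct1[OF V0] conjunct1[OF conjunct2[OF V0]]
    conjunct1[OF conjunct2[OF conjunct2[OF V0]]] conjunct2[OF conjunct2[OF conjunct2[OF V0]]]
  have "\<forall>W\<in>V. \<exists>U. W = X \<inter> (\<Inter>k\<in>{..<n-m}. fpre X h (b k) (U k)) \<and> (\<forall>k<n-m. U k \<in> A)"
  proof
    fix W assume "W \<in> V"
    then have "W \<in> ?J" using V(1) by (rule subsetD[rotated])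
    then show "\<exists>U. W = X \<inter> (\<Inter>k\<in>{..<n-m}. fpre X h (b k) (U k)) \<and> (\<forall>k<n-m. U k \<in> A)"
      by (simp only: join_pre_def mem_Collect_eq)
  qed
  then have "\<exists>UW. \<forall>W\<in>V. W = X \<inter> (\<Inter>k\<in>{..<n-m}. fpre X h (b k) (UW W k)) \<and> (\<forall>k<n-m. UW W k \<in> A)"
    by (rule bchoice)
  then obtain UW where UW0: "\<forall>W\<in>V. W = X \<inter> (\<Inter>k\<in>{..<n-m}. fpre X h (b k) (UW W k)) \<and> (\<forall>k<n-m. UW W k \<in> A)"
    ..
  have UW: "W = X \<inter> (\<Inter>k\<in>{..<n-m}. fpre X h (b k) (UW W k)) \<and> (\<forall>k<n-m. UW W k \<in> A)" if "W \<in> V" for W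
    by (rule bspec[OF UW0 that])
  define S where "S = (\<lambda>(W, P). X \<inter> (\<Inter>k\<in>{..<n}. fpre X g (a k) (if k < m then P k else UW W (k - m))))"
  define C where "C = S ` (V \<times> PiE {..<m} (\<lambda>_. A))"
  have finP: "finite (PiE {..<m} (\<lambda>_. A))" using A by (intro finite_PiE) auto
  have "C \<subseteq> join_pre X g a n A"
  proof
    fix Z assume "Z \<in> C"
    then obtain W P where WP: "W \<in> V" "P \<in> PiE {..<m} (\<lambda>_. A)" "Z = S (W, P)" unfolding C_def by auto
    have "\<forall>k<n. (if k < m then P k else UW W (k - m)) \<in> A"
      using WP(2) conjunct2[OF UW[OF WP(1)]] mn by auto
    then show "Z \<in> join_pre X g a n A" unfolding join_pre_def WP(3) S_def by auto
  qed
  moreover have "finite C" unfolding C_def using V(2) finP by auto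
  moreover have "X \<subseteq> \<Union>C"
  proof
    fix x assume x: "x \<in> X"
    have "fiter g m x \<in> X" using mapsg[OF x] .
    then obtain W where W: "W \<in> V" "fiter g m x \<in> W" using V(3) by auto
    have hW: "fiter h (b k) (fiter g m x) \<in> UW W k" if "k < n - m" for k
    proof -
      have "W = X \<inter> (\<Inter>k\<in>{..<n-m}. fpre X h (b k) (UW W k))" using UW[OF W(1)] by (rule conjunct1)
      then have "fiter g m x \<in> X \<inter> (\<Inter>k\<in>{..<n-m}. fpre X h (b k) (UW W k))" using W(2) by simp
      then have "fiter g m x \<in> fpre X h (b k) (UW W k)" using that by blast
      then show ?thesis by (simp add: fpre_def)
    qed
    define P where "P = restrict (\<lambda>k. SOME B. B \<in> A \<and> fiter g (a k) x \<in> B) {..<m}"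
    have Pk: "P k \<in> A \<and> fiter g (a k) x \<in> P k" if "k < m" for k
    proof -
      have "fiter g (a k) x \<in> \<Union>A" using mapsg[OF x] A by auto
      then have "\<exists>B. B \<in> A \<and> fiter g (a k) x \<in> B" by blast
      then have "(SOME B. B \<in> A \<and> fiter g (a k) x \<in> B) \<in> A \<and> fiter g (a k) x \<in> (SOME B. B \<in> A \<and> fiter g (a k) x \<in> B)"
        by (rule someI_ex)
      then show ?thesis unfolding P_def using that by simp
    qed
    have P: "P \<in> PiE {..<m} (\<lambda>_. A)" using Pk unfolding P_def by auto
    define T where "T = (\<lambda>k. if k < m then P k else UW W (k - m))"
    have Tk: "fiter g (a k) x \<in> T k" if "k < n" for k
    proof (cases "k < m")
      case True then show ?thesis using Pk[OF True] unfolding T_def by simp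
    next
      case False
      have "k \<le> a k" using a by (rule strict_mono_imp_increasing)
      then have ak: "a k = m + b (k - m)" using False unfolding b_def by simp
      have "fiter g (a k) x = fiter h (b (k - m)) (fiter g m x)" by (simp only: ak comp)
      moreover have "k - m < n - m" using False that by simp
      ultimately show ?thesis using hW[of "k - m"] False unfolding T_def by simp
    qed
    have "x \<in> fpre X g (a k) (T k)" if "k < n" for k
      using x Tk[OF that] unfolding fpre_def by blast
    then have "x \<in> X \<inter> (\<Inter>k\<in>{..<n}. fpre X g (a k) (T k))" using x by blast
    moreover have "S (W, P) = X \<inter> (\<Inter>k\<in>{..<n}. fpre X g (a k) (T k))"
      unfolding S_def T_def by simp
    ultimately have "x \<in> S (W, P)" by simp
    then show "x \<in> \<Union>C" unfolding C_def using W(1) P by blast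
  qed
  ultimately have "Ncov X (join_pre X g a n A) \<le> card C" by (rule Ncov_le)
  also have "card C \<le> card (V \<times> PiE {..<m} (\<lambda>_. A))" unfolding C_def by (rule card_image_le) (use V(2) finP in auto)
  also have "\<dots> = card V * card A ^ m" by (simp add: card_cartesian_product card_PiE)
  finally show ?thesis using V(4) unfolding b_def by simp
qed


lemma fiter_maps:
  assumes "\<And>n. f n ` X \<subseteq> X" "x \<in> X"
  shows "fiter (\<lambda>n. f (i + n)) k x \<in> X"
proof (induction k)
  case 0 then show ?case using assms(2) by simp
next
  case (Suc k)
  have "fiter (\<lambda>n. f (i + n)) (Suc k) x = f (i + k) (fiter (\<lambda>n. f (i + n)) k x)" by simp
  also have "\<dots> \<in> X" using assms(1) Suc.IH by blast
  finally show ?case .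
qed

lemma fiter_comp:
  "fiter (\<lambda>n. f (i + n)) (m + t) x = fiter (\<lambda>n. f (i + m + n)) t (fiter (\<lambda>n. f (i + n)) m x)"
proof (induction t)
  case 0 then show ?case by simp
next
  case (Suc t)
  have "fiter (\<lambda>n. f (i + n)) (m + Suc t) x = f (i + (m + t)) (fiter (\<lambda>n. f (i + n)) (m + t) x)"
    by simp
  also have "\<dots> = f (i + m + t) (fiter (\<lambda>n. f (i + m + n)) t (fiter (\<lambda>n. f (i + n)) m x))"
    by (simp only: Suc.IH add.assoc)
  also have "\<dots> = fiter (\<lambda>n. f (i + m + n)) (Suc t) (fiter (\<lambda>n. f (i + n)) m x)" by simp
  finally show ?case .
qed

lemma ln_nat_nonneg: "0 \<le> ln (real (N::nat))"
  by (cases "N = 0") simp_all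

lemma ln_ratio:
  fixes N1 N2 c k m :: nat
  assumes "N1 \<le> N2 * c" "0 < k"
  shows "ln (real N1) / real (k + m) \<le> ln (real (max 1 c)) / real (k + m) + ln (real N2) / real k"
proof -
  have c1: "0 \<le> ln (real (max 1 c))" by (rule ln_nat_nonneg)
  have L1: "ln (real N1) \<le> ln (real (max 1 c)) + ln (real N2)"
  proof (cases "N1 = 0")
    case True then show ?thesis using c1 ln_nat_nonneg[of N2] by simp
  next
    case False
    then have "0 < N2 * c" using assms(1) by linarith
    then have "0 < N2" "0 < c" by simp_all
    then have "max 1 c = c" by simp
    have "real N1 \<le> real N2 * real c" using assms(1) by (metis of_nat_le_iff of_nat_mult)
    then have "ln (real N1) \<le> ln (real N2 * real c)" using False by simp
    also have "\<dots> = ln (real N2) + ln (real c)" using \<open>0 < N2\<close> \<open>0 < c\<close> by (simp add: ln_mult)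
    finally show ?thesis using \<open>max 1 c = c\<close> by simp
  qed
  have pos: "0 < real (k + m)" using assms(2) by simp
  have L2: "ln (real N2) / real (k + m) \<le> ln (real N2) / real k"
    using ln_nat_nonneg[of N2] assms(2) by (intro divide_left_mono) auto
  have "ln (real N1) / real (k + m) \<le> (ln (real (max 1 c)) + ln (real N2)) / real (k + m)"
    using L1 pos by (intro divide_right_mono) auto
  also have "\<dots> = ln (real (max 1 c)) / real (k + m) + ln (real N2) / real (k + m)"
    by (simp add: add_divide_distrib)
  also have "\<dots> \<le> ln (real (max 1 c)) / real (k + m) + ln (real N2) / real k"
    using L2 by simp
  finally show ?thesis .
qed

lemma const_over_shift_limsup:
  "limsup (\<lambda>k. ereal (C / real (k + m))) = 0"
proof -
  have "filterlim (\<lambda>k. real m + real k) at_top sequentially"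
    by (rule filterlim_tendsto_add_at_top[OF tendsto_const filterlim_real_sequentially])
  then have "filterlim (\<lambda>k. real (k + m)) at_top sequentially" by (simp add: add.commute)
  then have "((\<lambda>k. C / real (k + m)) \<longlongrightarrow> 0) sequentially"
    by (rule real_tendsto_divide_at_top[OF tendsto_const])
  then have "((\<lambda>k. ereal (C / real (k + m))) \<longlongrightarrow> ereal 0) sequentially"
    by (rule tendsto_ereal)
  then have "limsup (\<lambda>k. ereal (C / real (k + m))) = ereal 0"
    by (intro lim_imp_Limsup) simp_all
  then show ?thesis by (simp add: zero_ereal_def)
qed

lemma entropy_cover_le:
  assumes A: "finite A" "\<Union>A = X"
    and mapsg: "\<And>n x. x \<in> X \<Longrightarrow> fiter g n x \<in> X"
    and mapsh: "\<And>n x. x \<in> X \<Longrightarrow> fiter h n x \<in> X"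
    and comp: "\<And>t x. fiter g (m + t) x = fiter h t (fiter g m x)"
    and a: "strict_mono a"
  shows "limsup (\<lambda>n. ereal (ln (real (Ncov X (join_pre X g a n A))) / real n))
       \<le> limsup (\<lambda>n. ereal (ln (real (Ncov X (join_pre X h (\<lambda>k. a (k + m) - m) n A))) / real n))"
    (is "limsup ?x \<le> limsup ?y")
proof -
  define c where "c = max 1 (card A ^ m)"
  have "limsup ?x = limsup (\<lambda>k. ?x (k + m))" using limsup_shift_k[of ?x m] by simp
  also have "\<dots> \<le> limsup (\<lambda>k. ereal (ln (real c) / real (k + m)) + ?y k)"
  proof (rule Limsup_mono)
    show "\<forall>\<^sub>F k in sequentially. ?x (k + m) \<le> ereal (ln (real c) / real (k + m)) + ?y k"
      unfolding eventually_sequentially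
    proof (intro exI allI impI)
      fix k :: nat assume "1 \<le> k"
      have N: "Ncov X (join_pre X g a (k + m) A)
          \<le> Ncov X (join_pre X h (\<lambda>k. a (k + m) - m) (k + m - m) A) * card A ^ m"
        by (rule Ncov_bound[OF A mapsg mapsh comp a le_add2])
      have "ln (real (Ncov X (join_pre X g a (k + m) A))) / real (k + m)
          \<le> ln (real c) / real (k + m) + ln (real (Ncov X (join_pre X h (\<lambda>k. a (k + m) - m) k A))) / real k"
        unfolding c_def using N \<open>1 \<le> k\<close> by (intro ln_ratio) simp_all
      then show "?x (k + m) \<le> ereal (ln (real c) / real (k + m)) + ?y k" by simp
    qed
  qed
  also have "\<dots> \<le> limsup (\<lambda>k. ereal (ln (real c) / real (k + m))) + limsup ?y"
    by (rule ereal_limsup_add_mono)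
  also have "\<dots> = limsup ?y" by (simp only: const_over_shift_limsup add_0_left)
  finally show ?thesis .
qed

theorem proposition4p5:
  fixes X :: "'a::metric_space set" and f :: "nat \<Rightarrow> 'a \<Rightarrow> 'a" and i j :: nat
  assumes "compact X"
    and "\<And>n. continuous_on X (f n)"
    and "\<And>n. f n ` X \<subseteq> X"
    and "i \<le> j"
  shows "seq_entropy_star X (\<lambda>n. f (i + n)) \<le> seq_entropy_star X (\<lambda>n. f (j + n))"
proof -
  define m where "m = j - i"
  have jm: "j = i + m" using assms(4) unfolding m_def by simp
  let ?g = "\<lambda>n. f (i + n)"
  let ?h = "\<lambda>n. f (i + m + n)"
  have mapsg: "\<And>n x. x \<in> X \<Longrightarrow> fiter ?g n x \<in> X" by (rule fiter_maps[OF assms(3)])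
  have mapsh: "\<And>n x. x \<in> X \<Longrightarrow> fiter ?h n x \<in> X" by (rule fiter_maps[OF assms(3)])
  have comp: "\<And>t x. fiter ?g (m + t) x = fiter ?h t (fiter ?g m x)" by (rule fiter_comp)
  have "seq_entropy_star X ?g \<le> seq_entropy_star X ?h"
    unfolding seq_entropy_star_def
  proof (rule SUP_least)
    fix a :: "nat \<Rightarrow> nat" assume "a \<in> {a. strict_mono a}"
    then have a: "strict_mono a" by simp
    define b where "b = (\<lambda>k. a (k + m) - m)"
    have b: "strict_mono b" unfolding strict_mono_def b_def
    proof (intro allI impI)
      fix x y :: nat assume "x < y"
      then have "a (x + m) < a (y + m)" using a by (simp add: strict_monoD)
      moreover have "x + m \<le> a (x + m)" using a by (rule strict_mono_imp_increasing)
      ultimately show "a (x + m) - m < a (y + m) - m" by simp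
    qed
    have "seq_entropy X ?g a \<le> seq_entropy X ?h b"
      unfolding seq_entropy_def
    proof (rule SUP_mono)
      fix A assume A: "A \<in> open_covers X"
      then have A': "finite A" "\<Union>A = X" unfolding open_covers_def by simp_all
      show "\<exists>A'\<in>open_covers X. limsup (\<lambda>n. ereal (ln (real (Ncov X (join_pre X ?g a n A))) / real n))
          \<le> limsup (\<lambda>n. ereal (ln (real (Ncov X (join_pre X ?h b n A'))) / real n))"
        using entropy_cover_le[OF A' mapsg mapsh comp a] A unfolding b_def by (intro bexI)
    qed
    also have "\<dots> \<le> (SUP a\<in>{a. strict_mono a}. seq_entropy X ?h a)"
      using b by (intro SUP_upper) simp
    finally show "seq_entropy X ?g a \<le> (SUP a\<in>{a. strict_mono a}. seq_entropy X ?h a)" .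
  qed
  then show ?thesis unfolding jm .
qed

end
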